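(* Consider the asynchronous $(n,k)$ game on the complete graph with agent set $[n]$ ($n\ge2$) consisting of $n_r$ rejectors and $n-n_r$ random followers, and let $Z_t=\sum_{i\in[n]}x_i(t)$. Then $$\mathbb{E}[Z_{t+1}-Z_t]=-\frac{n_r\,\mathbb{E}[Z_t]}{n(n-1)},$$ and $(Z_t)_{t\ge0}$ is a supermartingale.
   Context: Each agent $i\in[n]$ holds an opinion $x_i(t)\in\{0,1\}$ at time $t=0,1,2,\dots$. The social graph is complete: every agent's social neighbors are all the other $n-1$ agents. The game is asynchronous: at each time step a single agent, chosen uniformly at random from $[n]$ (independently of the past), updates its opinion, and all other opinions stay the same. A rejector holds opinion $0$ at all times. A random follower has initial opinion distributed as Bernoulli$(1/2)$ (independently across agents), and when it updates it adopts the current opinion of one of its social neighbors chosen uniformly at random. *)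

theory Defs
  imports "HOL-Probability.Probability"
begin

text \<open>Agents are 0,...,n-1. A state is an opinion profile x :: nat => bool
  (True = opinion 1); only the values at agents below n matter.
  R is the set of rejectors; all other agents are random followers.\<close>

type_synonym state = "nat \<Rightarrow> bool"

definition Zsum :: "nat \<Rightarrow> state \<Rightarrow> real" where
  "Zsum n x = (\<Sum>i<n. of_bool (x i))"

definition init_dist :: "nat \<Rightarrow> nat set \<Rightarrow> state pmf" where
  "init_dist n R = Pi_pmf {..<n} False
     (\<lambda>i. if i \<in> R then return_pmf False else bernoulli_pmf (1/2))"

definition step :: "nat \<Rightarrow> nat set \<Rightarrow> state \<Rightarrow> state pmf" where
  "step n R x = pmf_of_set {..<n} \<bind> (\<lambda>i.
     if i \<in> R then return_pmf (x(i := False))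
     else map_pmf (\<lambda>j. x(i := x j)) (pmf_of_set ({..<n} - {i})))"

text \<open>Distribution of the trajectory [x(0), ..., x(t)] (a list of length t+1).\<close>
primrec paths :: "nat \<Rightarrow> nat set \<Rightarrow> nat \<Rightarrow> state list pmf" where
  "paths n R 0 = map_pmf (\<lambda>x. [x]) (init_dist n R)"
| "paths n R (Suc t) = paths n R t \<bind> (\<lambda>p. map_pmf (\<lambda>y. p @ [y]) (step n R (last p)))"

text \<open>Supermartingale property of Y(x(t)) with respect to the natural filtration
  F_t = sigma(x(0),...,x(t)): integrability and, for every F_t-event
  (i.e. every set A of trajectory prefixes of length t+1),
  E[(Y_(t+1) - Y_t) 1_A] \<le> 0, i.e. E[Y_(t+1) | F_t] \<le> Y_t a.s.\<close>
definition supermartingale_along :: "(nat \<Rightarrow> state list pmf) \<Rightarrow> (state \<Rightarrow> real) \<Rightarrow> bool" where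
  "supermartingale_along P Y \<longleftrightarrow>
     (\<forall>t. integrable (measure_pmf (P t)) (\<lambda>p. Y (p ! t))) \<and>
     (\<forall>t A. measure_pmf.expectation (P (Suc t))
              (\<lambda>p. indicator A (take (Suc t) p) * (Y (p ! Suc t) - Y (p ! t))) \<le> 0)"

end

theory Submission
  imports Defs
begin
lemma integral_bind_pmf_bnd:
  fixes f :: "'b \<Rightarrow> real"
  assumes "\<And>y. \<bar>f y\<bar> \<le> B"
  shows "measure_pmf.expectation (bind_pmf M N) f = measure_pmf.expectation M (\<lambda>x. measure_pmf.expectation (N x) f)"
  unfolding measure_pmf_bind
  apply (rule integral_bind[where K="count_space UNIV" and B=B and B'=1])
  using assms by (auto simp: measure_pmf.finite_measure_axioms measure_pmf.emeasure_space_1 space_subprob_algebra measure_pmf.subprob_space_axioms)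

lemma Zsum_upd: assumes "i < n" shows "Zsum n (x(i := b)) = Zsum n x - of_bool (x i) + of_bool b"
proof -
  have "Zsum n (x(i := b)) = of_bool b + (\<Sum>j\<in>{..<n}-{i}. of_bool ((x(i:=b)) j))"
    unfolding Zsum_def using assms by (subst sum.remove[of _ i]) auto
  also have "(\<Sum>j\<in>{..<n}-{i}. of_bool ((x(i:=b)) j)) = (\<Sum>j\<in>{..<n}-{i}. (of_bool (x j)::real))"
    by (rule sum.cong) auto
  also have "\<dots> = Zsum n x - of_bool (x i)"
    unfolding Zsum_def using assms by (subst sum.remove[of _ i, where A="{..<n}"]) auto
  finally show ?thesis by linarith
qed

lemma Zsum_bnd: "\<bar>Zsum n x\<bar> \<le> n"
proof -
  have "0 \<le> Zsum n x" unfolding Zsum_def by (simp add: sum_nonneg)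
  moreover have "Zsum n x \<le> (\<Sum>i<n. 1)" unfolding Zsum_def by (rule sum_mono) simp
  ultimately show ?thesis by simp
qed

lemma sum_rm: assumes "a < n" shows "(\<Sum>j\<in>{..<n}-{a}. (of_bool (x j)::real)) = Zsum n x - of_bool (x a)"
  unfolding Zsum_def using assms by (subst sum.remove[of _ a, where A="{..<n}"]) auto

lemma ne_rm: fixes n a :: nat assumes "2 \<le> n" "a < n" shows "{..<n} - {a} \<noteq> {}"
proof -
  have "(if a = 0 then 1 else 0) \<in> {..<n} - {a}" using assms by auto
  then show ?thesis by blast
qed

lemma step_exp:
  assumes n: "n \<ge> 2" and R: "R \<subseteq> {..<n}" and x: "\<forall>i\<in>R. \<not> x i"
  shows "measure_pmf.expectation (step n R x) (\<lambda>y. Zsum n y - Zsum n x)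
         = - (real (card R) * Zsum n x) / (real n * (real n - 1))"
proof -
  define Z where "Z = Zsum n x"
  define h where "h a = (Z - of_bool (x a)) / (real n - 1) - of_bool (x a)" for a
  have n1: "real n - 1 > 0" using n by simp
  have br: "measure_pmf.expectation (if a \<in> R then return_pmf (x(a := False))
     else map_pmf (\<lambda>j. x(a := x j)) (pmf_of_set ({..<n} - {a}))) (\<lambda>y. Zsum n y - Zsum n x)
     = (if a \<in> R then 0 else h a)" if a: "a < n" for a
  proof (cases "a \<in> R")
    case True
    then have "x(a := False) = x" using x by (auto simp: fun_eq_iff)
    then show ?thesis using True by simp
  next
    case False
    have ne: "{..<n} - {a} \<noteq> {}"
    proof -
      have "(if a = 0 then 1 else 0) \<in> {..<n} - {a}" using n by auto
      then show ?thesis by blast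
    qed
    have c: "card ({..<n} - {a}) = n - 1" using a by simp
    have "measure_pmf.expectation (map_pmf (\<lambda>j. x(a := x j)) (pmf_of_set ({..<n} - {a}))) (\<lambda>y. Zsum n y - Zsum n x)
        = (\<Sum>j\<in>{..<n}-{a}. of_bool (x j) - of_bool (x a)) / real (n - 1)"
      using ne a c by (simp add: integral_pmf_of_set Zsum_upd)
    also have "\<dots> = ((Z - of_bool (x a)) - real (n - 1) * of_bool (x a)) / real (n - 1)"
      by (simp only: sum_subtractf sum_rm[OF a] sum_constant c Z_def)
    also have "\<dots> = h a" unfolding h_def using n1 n by (simp add: field_simps of_nat_diff)
    finally show ?thesis using False by simp
  qed
  have "measure_pmf.expectation (step n R x) (\<lambda>y. Zsum n y - Zsum n x)
      = (\<Sum>a<n. (if a \<in> R then 0 else h a) / real n)"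
    unfolding step_def using n set_pmf_of_set[OF ne_rm[OF n]]
    by (subst pmf_expectation_bind_pmf_of_set) (auto simp: br divide_inverse_commute ne_rm[OF n] lessThan_empty_iff)
  also have "\<dots> = ((\<Sum>a<n. h a) - (\<Sum>a\<in>R. h a)) / real n"
  proof -
    have "(\<Sum>a<n. (if a \<in> R then 0 else h a)) = (\<Sum>a<n. h a) - (\<Sum>a\<in>R. h a)"
    proof -
      have "(\<Sum>a<n. h a) = (\<Sum>a<n. (if a \<in> R then h a else 0)) + (\<Sum>a<n. (if a \<in> R then 0 else h a))"
        by (subst sum.distrib[symmetric]) (rule sum.cong, auto)
      moreover have "(\<Sum>a<n. (if a \<in> R then h a else 0)) = (\<Sum>a\<in>R. h a)"
        using R by (simp add: sum.If_cases Int_absorb1 inf.absorb2)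
      ultimately show ?thesis by simp
    qed
    then show ?thesis by (simp only: sum_divide_distrib[symmetric])
  qed
  also have "(\<Sum>a<n. h a) = 0"
  proof -
    have "(\<Sum>a<n. h a) = (real n * Z - Z) / (real n - 1) - Z"
      unfolding h_def by (simp add: sum_subtractf sum_divide_distrib[symmetric] Z_def Zsum_def)
    also have "\<dots> = 0" using n1 by (simp add: field_simps)
    finally show ?thesis .
  qed
  also have "(\<Sum>a\<in>R. h a) = real (card R) * Z / (real n - 1)"
    unfolding h_def using x by simp
  finally show ?thesis unfolding Z_def by (simp add: field_simps)
qed

lemma paths_inv:
  assumes "p \<in> set_pmf (paths n R t)"
  shows "length p = Suc t \<and> (\<forall>i\<in>R. \<not> last p i)"
  using assms
proof (induction t arbitrary: p)
  case 0
  then obtain x where p: "p = [x]" and x: "x \<in> set_pmf (init_dist n R)" by auto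
  have "\<forall>i\<in>R. \<not> x i"
  proof
    fix i assume i: "i \<in> R"
    show "\<not> x i"
    proof (cases "i < n")
      case True
      then show ?thesis using x i unfolding init_dist_def
        by (auto simp: set_Pi_pmf PiE_dflt_def)
    next
      case False
      then show ?thesis using x unfolding init_dist_def
        by (auto simp: set_Pi_pmf PiE_dflt_def)
    qed
  qed
  then show ?case using p by simp
next
  case (Suc t)
  then obtain q y where q: "q \<in> set_pmf (paths n R t)" and y: "y \<in> set_pmf (step n R (last q))"
    and p: "p = q @ [y]" by auto
  from Suc.IH[OF q] have l: "length q = Suc t" and inv: "\<forall>i\<in>R. \<not> last q i" by auto
  have "\<forall>i\<in>R. \<not> y i"
    using y inv unfolding step_def
    by (auto split: if_splits simp: set_pmf_of_set)
  then show ?case using p l by simp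
qed

lemma key:
  assumes n: "n \<ge> 2" and R: "R \<subseteq> {..<n}" and G: "\<And>q. \<bar>G q\<bar> \<le> 1"
  shows "measure_pmf.expectation (paths n R (Suc t))
           (\<lambda>p. G (take (Suc t) p) * (Zsum n (p ! Suc t) - Zsum n (p ! t)))
       = - real (card R) / (real n * (real n - 1)) *
           measure_pmf.expectation (paths n R t) (\<lambda>p. G p * Zsum n (p ! t))"
proof -
  have bnd: "\<bar>G (take (Suc t) p) * (Zsum n (p ! Suc t) - Zsum n (p ! t))\<bar> \<le> 1 * (2 * real n)" for p
  proof -
    have "\<bar>Zsum n (p ! Suc t) - Zsum n (p ! t)\<bar> \<le> 2 * real n"
      using Zsum_bnd[of n "p ! Suc t"] Zsum_bnd[of n "p ! t"] by linarith
    then show ?thesis unfolding abs_mult using G by (intro mult_mono) auto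
  qed
  have "measure_pmf.expectation (paths n R (Suc t))
           (\<lambda>p. G (take (Suc t) p) * (Zsum n (p ! Suc t) - Zsum n (p ! t)))
      = measure_pmf.expectation (paths n R t) (\<lambda>q. measure_pmf.expectation (step n R (last q))
           (\<lambda>y. G (take (Suc t) (q @ [y])) * (Zsum n ((q @ [y]) ! Suc t) - Zsum n ((q @ [y]) ! t))))"
    by (simp only: paths.simps integral_bind_pmf_bnd[OF bnd] integral_map_pmf)
  also have "\<dots> = measure_pmf.expectation (paths n R t)
      (\<lambda>q. - real (card R) / (real n * (real n - 1)) * (G q * Zsum n (q ! t)))"
  proof (rule integral_cong_AE)
    show "AE q in measure_pmf (paths n R t). measure_pmf.expectation (step n R (last q))
           (\<lambda>y. G (take (Suc t) (q @ [y])) * (Zsum n ((q @ [y]) ! Suc t) - Zsum n ((q @ [y]) ! t)))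
         = - real (card R) / (real n * (real n - 1)) * (G q * Zsum n (q ! t))"
    proof (rule AE_pmfI)
      fix q assume q: "q \<in> set_pmf (paths n R t)"
      from paths_inv[OF q] have l: "length q = Suc t" and inv: "\<forall>i\<in>R. \<not> last q i" by auto
      have lt: "q ! t = last q" using l by (cases q rule: rev_cases) (auto simp: nth_append)
      have "measure_pmf.expectation (step n R (last q))
           (\<lambda>y. G (take (Suc t) (q @ [y])) * (Zsum n ((q @ [y]) ! Suc t) - Zsum n ((q @ [y]) ! t)))
          = measure_pmf.expectation (step n R (last q)) (\<lambda>y. G q * (Zsum n y - Zsum n (last q)))"
        using l lt by (simp add: nth_append)
      also have "\<dots> = G q * measure_pmf.expectation (step n R (last q)) (\<lambda>y. Zsum n y - Zsum n (last q))"
        by simp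
      also have "\<dots> = - real (card R) / (real n * (real n - 1)) * (G q * Zsum n (q ! t))"
        using step_exp[OF n R inv] lt by simp
      finally show "measure_pmf.expectation (step n R (last q))
           (\<lambda>y. G (take (Suc t) (q @ [y])) * (Zsum n ((q @ [y]) ! Suc t) - Zsum n ((q @ [y]) ! t)))
         = - real (card R) / (real n * (real n - 1)) * (G q * Zsum n (q ! t))" .
    qed
  qed simp_all
  also have "\<dots> = - real (card R) / (real n * (real n - 1)) *
           measure_pmf.expectation (paths n R t) (\<lambda>p. G p * Zsum n (p ! t))"
    by simp
  finally show ?thesis .
qed

theorem lemma4:
  fixes n n_r :: nat and R :: "nat set"
  assumes "n \<ge> 2" and "R \<subseteq> {..<n}" and "card R = n_r"
  shows "\<forall>t. measure_pmf.expectation (paths n R (Suc t))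
               (\<lambda>p. Zsum n (p ! Suc t) - Zsum n (p ! t))
             = - (real n_r * measure_pmf.expectation (paths n R t) (\<lambda>p. Zsum n (p ! t)))
                 / (real n * (real n - 1))
         \<and> supermartingale_along (paths n R) (Zsum n)"
proof -
  have n1: "real n - 1 > 0" using assms(1) by simp
  have part1: "measure_pmf.expectation (paths n R (Suc t))
               (\<lambda>p. Zsum n (p ! Suc t) - Zsum n (p ! t))
             = - (real n_r * measure_pmf.expectation (paths n R t) (\<lambda>p. Zsum n (p ! t)))
                 / (real n * (real n - 1))" for t
    using key[OF assms(1,2), of "\<lambda>_. 1" t] assms(3) by simp
  have int: "integrable (measure_pmf (paths n R t)) (\<lambda>p. Zsum n (p ! t))" for t
    by (rule measure_pmf.integrable_const_bound[where B="real n"]) (auto simp: Zsum_bnd)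
  have sm: "measure_pmf.expectation (paths n R (Suc t))
              (\<lambda>p. indicator A (take (Suc t) p) * (Zsum n (p ! Suc t) - Zsum n (p ! t))) \<le> 0" for t A
  proof -
    have "0 \<le> measure_pmf.expectation (paths n R t) (\<lambda>p. indicator A p * Zsum n (p ! t))"
      using Zsum_bnd by (intro integral_nonneg_AE AE_pmfI) (auto simp: Zsum_def sum_nonneg)
    moreover have "- real (card R) / (real n * (real n - 1)) \<le> 0" using n1 by simp
    moreover have "measure_pmf.expectation (paths n R (Suc t))
              (\<lambda>p. indicator A (take (Suc t) p) * (Zsum n (p ! Suc t) - Zsum n (p ! t)))
       = - real (card R) / (real n * (real n - 1)) *
           measure_pmf.expectation (paths n R t) (\<lambda>p. indicator A p * Zsum n (p ! t))"
      by (rule key[OF assms(1,2)]) (auto simp: indicator_def)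
    ultimately show ?thesis by (metis mult_nonpos_nonneg)
  qed
  show ?thesis using part1 int sm unfolding supermartingale_along_def by blast
qed
end
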